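(* Let $M\geq 1$, $P=4M-3$, and let $x\in\ell(\mathbb{Z}_P)$ satisfy $x[p]=0$ for all $p=M,\ldots,4M-4$. Then for all $p=1,\ldots,2M-2$, $$\operatorname{CirAut}(x+Rx)[p]=\begin{cases}\displaystyle 2\operatorname{Re}\Big(\sum_{p'=\frac{p+1}{2}}^{M-1}x[p']\big(\overline{x[p'-p]}+\overline{x[p-p']}\big)\Big) & \text{if } p \text{ is odd},\\[2ex] \displaystyle 2\operatorname{Re}\Big(\sum_{p'=\frac{p}{2}+1}^{M-1}x[p']\big(\overline{x[p'-p]}+\overline{x[p-p']}\big)\Big)+\big|x[\tfrac{p}{2}]\big|^2 & \text{if } p \text{ is even},\end{cases}$$ where indices of $x$ are interpreted modulo $P$.
   Context: $\ell(\mathbb{Z}_P)$ denotes the space of $P$-periodic functions $u\colon\mathbb{Z}\to\mathbb{C}$, with inner product $\langle u,v\rangle=\sum_{p\in\mathbb{Z}_P}u[p]\overline{v[p]}$. The translation operator is $(T^pu)[p']:=u[p'-p]$ and the reversal operator is $(Ru)[p]:=u[-p]$. The circular autocorrelation is $\operatorname{CirAut}(u)[p]:=\langle u,T^pu\rangle=\sum_{p'\in\mathbb{Z}_P}u[p']\overline{u[p'-p]}$. *)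

theory Defs
  imports Complex_Main
begin

text \<open>Elements of l(Z_P) are represented as functions int => complex that are P-periodic.
  Sums over Z_P are taken over the representatives {0..<P}.\<close>

definition periodic_fun :: "nat \<Rightarrow> (int \<Rightarrow> complex) \<Rightarrow> bool" where
  "periodic_fun P u \<longleftrightarrow> (\<forall>p. u (p + int P) = u p)"

definition inner_ZP :: "nat \<Rightarrow> (int \<Rightarrow> complex) \<Rightarrow> (int \<Rightarrow> complex) \<Rightarrow> complex" where
  "inner_ZP P u v = (\<Sum>p\<in>{0..<int P}. u p * cnj (v p))"

definition transl :: "int \<Rightarrow> (int \<Rightarrow> complex) \<Rightarrow> (int \<Rightarrow> complex)" where
  "transl p u = (\<lambda>p'. u (p' - p))"

definition reversal :: "(int \<Rightarrow> complex) \<Rightarrow> (int \<Rightarrow> complex)" where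
  "reversal u = (\<lambda>p. u (- p))"

definition CirAut :: "nat \<Rightarrow> (int \<Rightarrow> complex) \<Rightarrow> int \<Rightarrow> complex" where
  "CirAut P u p = inner_ZP P u (transl p u)"

end

theory Submission
  imports Defs
begin

lemma sum_supp:
  assumes "finite I" "finite J" "S \<subseteq> I" "S \<subseteq> J" "\<And>q. q \<in> I \<union> J \<Longrightarrow> q \<notin> S \<Longrightarrow> f q = 0"
  shows "sum f I = sum f J"
proof -
  have "sum f I = sum f S" by (rule sum.mono_neutral_right) (use assms in auto)
  moreover have "sum f J = sum f S" by (rule sum.mono_neutral_right) (use assms in auto)
  ultimately show ?thesis by simp
qed

lemma periodic_mod:
  assumes "periodic_fun P x"
  shows "x (q mod int P) = x q"
proof -
  have A: "x (r + int k * int P) = x r" for r k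
  proof (induction k arbitrary: r)
    case 0 then show ?case by simp
  next
    case (Suc k)
    have "r + int (Suc k) * int P = (r + int k * int P) + int P" by (simp add: algebra_simps)
    then have "x (r + int (Suc k) * int P) = x (r + int k * int P)"
      using assms unfolding periodic_fun_def by (metis add.assoc)
    then show ?case using Suc by simp
  qed
  have q: "q = q mod int P + (q div int P) * int P" by simp
  show ?thesis
  proof (cases "q div int P \<ge> 0")
    case True
    then have "x (q mod int P + int (nat (q div int P)) * int P) = x (q mod int P)" using A by blast
    then show ?thesis using True q by simp
  next
    case False
    have "q mod int P = q + int (nat (- (q div int P))) * int P" using False q by (simp; linarith)
    then show ?thesis using A[of q "nat (- (q div int P))"] by metis
  qed
qed

lemma sum_period:
  assumes "periodic_fun P g" "P > 0"
  shows "sum g {a..<a + int P} = sum g {0..<int P}"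
proof -
  have "sum g {a..<a + int P} = sum (\<lambda>q. g (q mod int P)) {a..<a + int P}"
    using periodic_mod[OF assms(1)] by simp
  also have "\<dots> = sum g ((\<lambda>q. q mod int P) ` {a..<a + int P})"
  proof (rule sum.reindex[symmetric, unfolded comp_def])
    show "inj_on (\<lambda>q. q mod int P) {a..<a + int P}"
    proof
      fix q1 q2 assume h: "q1 \<in> {a..<a + int P}" "q2 \<in> {a..<a + int P}" "q1 mod int P = q2 mod int P"
      then obtain k where k: "q1 - q2 = int P * k" by (metis dvdE mod_eq_dvd_iff)
      have "k = 0"
      proof (rule ccontr)
        assume "k \<noteq> 0"
        then have "k \<ge> 1 \<or> k \<le> -1" by linarith
        then have "int P * k \<ge> int P \<or> int P * k \<le> - int P"
        proof
          assume "k \<ge> 1" then show ?thesis using assms(2) by (simp add: mult_le_cancel_left1)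
        next
          assume "k \<le> -1"
          then have "int P * k \<le> int P * (-1)" using assms(2) by (intro mult_left_mono) auto
          then show ?thesis by simp
        qed
        moreover have "q1 - q2 < int P" "q2 - q1 < int P" using h by auto
        ultimately show False using k by (elim disjE) linarith+
      qed
      then show "q1 = q2" using k by simp
    qed
  qed
  also have "(\<lambda>q. q mod int P) ` {a..<a + int P} = {0..<int P}"
  proof
    show "(\<lambda>q. q mod int P) ` {a..<a + int P} \<subseteq> {0..<int P}" using assms(2) by auto
    show "{0..<int P} \<subseteq> (\<lambda>q. q mod int P) ` {a..<a + int P}"
    proof
      fix r assume r: "r \<in> {0..<int P}"
      have "(a + (r - a) mod int P) mod int P = r"
        using r by (simp add: mod_add_right_eq)
      moreover have "a + (r - a) mod int P \<in> {a..<a + int P}" using assms(2) by simp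
      ultimately show "r \<in> (\<lambda>q. q mod int P) ` {a..<a + int P}" by (metis image_eqI)
    qed
  qed
  finally show ?thesis .
qed

lemma reflect_sum:
  fixes f :: "int \<Rightarrow> complex"
  shows "sum f {a..b} = sum (\<lambda>q. f (p - q)) {p - b..p - a}"
  by (rule sum.reindex_bij_witness[of _ "\<lambda>q. p - q" "\<lambda>q. p - q"]) auto

lemma core:
  fixes z :: "int \<Rightarrow> complex" and m p lo :: int
  assumes zs: "\<And>q. z q \<noteq> 0 \<Longrightarrow> 0 \<le> q \<and> q \<le> m - 1"
    and m: "m \<ge> 1" and p: "1 \<le> p" "p \<le> 2 * m - 2"
    and lo: "lo = (if odd p then (p + 1) div 2 else p div 2 + 1)"
  shows "(\<Sum>q\<in>{-(2*m-2)..2*m-2}. (z q + z (-q)) * cnj (z (q - p) + z (p - q))) =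
     complex_of_real (2 * Re (\<Sum>a\<in>{lo..m-1}. z a * (cnj (z (a - p)) + cnj (z (p - a)))))
     + (if even p then complex_of_real ((cmod (z (p div 2)))\<^sup>2) else 0)"
proof -
  define N where "N = 2*m-2"
  define W where "W = {-N..N}"
  define A where "A = (\<Sum>q\<in>W. z q * cnj (z (q - p)))"
  define B where "B = (\<Sum>q\<in>W. z q * cnj (z (p - q)))"
  define C where "C = (\<Sum>q\<in>W. z (-q) * cnj (z (q - p)))"
  define D where "D = (\<Sum>q\<in>W. z (-q) * cnj (z (p - q)))"
  define H where "H = (\<Sum>q\<in>{lo..m-1}. z q * cnj (z (p - q)))"
  have zq: "z q = 0" if "q < 0 \<or> q > m - 1" for q using zs that by force
  have par: "odd p \<Longrightarrow> p = 2*(p div 2)+1" "even p \<Longrightarrow> p = 2*(p div 2)" by presburger+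
  have lop: "lo \<le> p" "lo \<ge> 1" using p lo by auto
  have T: "(\<Sum>q\<in>W. (z q + z (-q)) * cnj (z (q - p) + z (p - q))) = A + B + C + D"
    unfolding A_def B_def C_def D_def by (simp add: sum.distrib[symmetric] algebra_simps)
  have C0: "C = 0" unfolding C_def
  proof (rule sum.neutral, intro ballI)
    fix q assume "q \<in> W"
    show "z (-q) * cnj (z (q - p)) = 0"
    proof (cases "z (-q) = 0")
      case False
      then have "q \<le> 0" using zs by force
      then show ?thesis using zq[of "q - p"] p by simp
    qed simp
  qed
  have D: "D = cnj A"
  proof -
    have "D = (\<Sum>r\<in>{p - N..p + N}. z (r - p) * cnj (z r))"
      unfolding D_def W_def by (subst reflect_sum[where p = p]) simp
    also have "\<dots> = (\<Sum>r\<in>W. z (r - p) * cnj (z r))"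
      by (rule sum_supp[where S = "{0..m-1}"]) (use p m zq in \<open>auto simp: W_def N_def\<close>)
    also have "\<dots> = cnj A" unfolding A_def by (simp add: mult.commute)
    finally show ?thesis .
  qed
  have A: "A = (\<Sum>q\<in>{lo..m-1}. z q * cnj (z (q - p)))"
    unfolding A_def
    by (rule sum_supp[where S = "{p..m-1}"]) (use p m zq lop in \<open>auto simp: W_def N_def\<close>)
  have B0: "B = (\<Sum>q\<in>{0..p}. z q * cnj (z (p - q)))"
    unfolding B_def
    by (rule sum_supp[where S = "{0..p}"]) (use p m zq in \<open>auto simp: W_def N_def\<close>)
  have H: "(\<Sum>q\<in>{lo..p}. z q * cnj (z (p - q))) = H"
    unfolding H_def
    by (rule sum_supp[where S = "{lo..min p (m-1)}"]) (use p m zq in \<open>auto\<close>)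
  have refl: "(\<Sum>q\<in>{0..p-lo}. z q * cnj (z (p - q))) = cnj H"
  proof -
    have "(\<Sum>q\<in>{0..p-lo}. z q * cnj (z (p - q))) = (\<Sum>q\<in>{lo..p}. z (p - q) * cnj (z q))"
      by (subst reflect_sum[where p = p]) simp
    also have "\<dots> = cnj H"
      unfolding H[symmetric] by (simp add: mult.commute)
    finally show ?thesis .
  qed
  have B: "B = H + cnj H + (if even p then z (p div 2) * cnj (z (p div 2)) else 0)"
  proof (cases "odd p")
    case True
    have e: "p - lo = lo - 1" using lo True by presburger
    have sp: "{0..p} = {0..p-lo} \<union> {lo..p}" unfolding e using lop by auto
    have "B = (\<Sum>q\<in>{0..p-lo}. z q * cnj (z (p - q))) + (\<Sum>q\<in>{lo..p}. z q * cnj (z (p - q)))"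
      unfolding B0 sp by (subst sum.union_disjoint) (use e in auto)
    then show ?thesis using refl H True by simp
  next
    case False
    have e: "p - lo = lo - 2" using lo False by presburger
    have sp: "{0..p} = {0..p-lo} \<union> ({lo-1} \<union> {lo..p})" unfolding e using lop by auto
    have "B = (\<Sum>q\<in>{0..p-lo}. z q * cnj (z (p - q))) + (z (lo-1) * cnj (z (p - (lo-1))) + (\<Sum>q\<in>{lo..p}. z q * cnj (z (p - q))))"
    proof -
      have "B = (\<Sum>q\<in>{0..p-lo}. z q * cnj (z (p - q))) + (\<Sum>q\<in>{lo-1} \<union> {lo..p}. z q * cnj (z (p - q)))"
        unfolding B0 sp by (rule sum.union_disjoint) (use e in auto)
      also have "(\<Sum>q\<in>{lo-1} \<union> {lo..p}. z q * cnj (z (p - q))) = z (lo-1) * cnj (z (p - (lo-1))) + (\<Sum>q\<in>{lo..p}. z q * cnj (z (p - q)))"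
        by (subst sum.union_disjoint) auto
      finally show ?thesis .
    qed
    moreover have "lo - 1 = p div 2" "p - p div 2 = p div 2" using False lo by presburger+
    ultimately show ?thesis using refl H False by simp
  qed
  have R: "(\<Sum>a\<in>{lo..m-1}. z a * (cnj (z (a - p)) + cnj (z (p - a)))) = A + H"
    unfolding A H_def by (simp add: sum.distrib distrib_left)
  show ?thesis
    unfolding N_def[symmetric] W_def[symmetric] T C0 D R complex_add_cnj[symmetric] B
    using complex_norm_square[of "z (p div 2)"] by simp
qed

theorem theorem2:
  fixes M :: nat and x :: "int \<Rightarrow> complex"
  assumes "M \<ge> 1"
    and "periodic_fun (4 * M - 3) x"
    and "\<forall>p \<in> {int M .. 4 * int M - 4}. x p = 0"
  shows "\<forall>p \<in> {1 .. 2 * int M - 2}.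
     CirAut (4 * M - 3) (\<lambda>q. x q + reversal x q) p =
       (if odd p
        then complex_of_real (2 * Re (\<Sum>p'\<in>{(p + 1) div 2 .. int M - 1}.
                x p' * (cnj (x (p' - p)) + cnj (x (p - p')))))
        else complex_of_real (2 * Re (\<Sum>p'\<in>{p div 2 + 1 .. int M - 1}.
                x p' * (cnj (x (p' - p)) + cnj (x (p - p')))))
             + complex_of_real ((cmod (x (p div 2)))\<^sup>2))"
proof
  fix p assume pin: "p \<in> {1 .. 2 * int M - 2}"
  define Pn where "Pn = 4 * M - 3"
  define m where "m = int M"
  have m1: "m \<ge> 1" using assms(1) m_def by simp
  have Pi: "int Pn = 4 * m - 3" using assms(1) unfolding Pn_def m_def by simp
  have per: "x (a + int Pn) = x a" for a using assms(2) unfolding Pn_def periodic_fun_def by blast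
  have per2: "x (a - int Pn) = x a" for a using per[of "a - int Pn"] by simp
  have zero: "x q = 0" if "m \<le> q" "q \<le> 4*m - 4" for q using assms(3) that m_def by auto
  define z where "z q = (if 0 \<le> q \<and> q \<le> m - 1 then x q else 0)" for q
  have zs: "\<And>q. z q \<noteq> 0 \<Longrightarrow> 0 \<le> q \<and> q \<le> m - 1" unfolding z_def by (auto split: if_splits)
  have xz: "x q = z q" if "-(3*m-3) \<le> q" "q \<le> 3*m-3" for q
  proof -
    consider "0 \<le> q \<and> q \<le> m - 1" | "m \<le> q" | "q < 0" by linarith
    then show ?thesis
    proof cases
      case 1 then show ?thesis unfolding z_def by simp
    next
      case 2 then show ?thesis unfolding z_def using zero[of q] that by simp
    next
      case 3
      have "x q = x (q + int Pn)" using per by simp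
      also have "\<dots> = 0" using zero[of "q + int Pn"] that 3 Pi by simp
      finally show ?thesis unfolding z_def using 3 by simp
    qed
  qed
  have p: "1 \<le> p" "p \<le> 2 * m - 2" using pin m_def by auto
  define lo where "lo = (if odd p then (p + 1) div 2 else p div 2 + 1)"
  define y where "y q = x q + reversal x q" for q
  have yx: "y q = x q + x (-q)" for q unfolding y_def reversal_def by simp
  define g where "g q = y q * cnj (y (q - p))" for q
  have gper: "periodic_fun Pn g"
    unfolding periodic_fun_def g_def yx
  proof
    fix q
    have "x (- (q + int Pn)) = x (-q)" using per2[of "-q"] by (simp add: algebra_simps)
    moreover have "x (- (q + int Pn - p)) = x (p - q)" using per2[of "p-q"] by (simp add: algebra_simps)
    moreover have "x (q + int Pn - p) = x (q - p)" using per[of "q-p"] by (simp add: algebra_simps)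
    ultimately show "(x (q + int Pn) + x (- (q + int Pn))) * cnj (x (q + int Pn - p) + x (- (q + int Pn - p))) =
          (x q + x (- q)) * cnj (x (q - p) + x (- (q - p)))"
      using per[of q] by simp
  qed
  have "int Pn > 0" using Pi m1 by linarith
  then have Ppos: "Pn > 0" by simp
  have "CirAut Pn y p = sum g {0..<int Pn}"
    unfolding CirAut_def inner_ZP_def transl_def g_def by simp
  also have "\<dots> = sum g {-(2*m-2)..<-(2*m-2) + int Pn}"
    using sum_period[OF gper Ppos] by simp
  also have "{-(2*m-2)..<-(2*m-2) + int Pn} = {-(2*m-2)..2*m-2}" using Pi by auto
  also have "sum g {-(2*m-2)..2*m-2} = (\<Sum>q\<in>{-(2*m-2)..2*m-2}. (z q + z (-q)) * cnj (z (q - p) + z (p - q)))"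
  proof (rule sum.cong[OF refl])
    fix q assume q: "q \<in> {-(2*m-2)..2*m-2}"
    have e1: "x q = z q" "x (-q) = z (-q)" using q m1 by (auto intro!: xz)
    show "g q = (z q + z (-q)) * cnj (z (q - p) + z (p - q))"
    proof (cases "z q + z (-q) = 0")
      case True then show ?thesis unfolding g_def yx e1 by simp
    next
      case False
      then have "z q \<noteq> 0 \<or> z (-q) \<noteq> 0" by auto
      then have "-(m-1) \<le> q \<and> q \<le> m - 1" using zs by force
      then have "x (q - p) = z (q - p)" "x (p - q) = z (p - q)" using p by (auto intro!: xz)
      then show ?thesis unfolding g_def yx e1 by simp
    qed
  qed
  also have "\<dots> = complex_of_real (2 * Re (\<Sum>a\<in>{lo..m-1}. z a * (cnj (z (a - p)) + cnj (z (p - a)))))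
     + (if even p then complex_of_real ((cmod (z (p div 2)))\<^sup>2) else 0)"
    by (rule core[OF zs m1 p lo_def])
  also have "(\<Sum>a\<in>{lo..m-1}. z a * (cnj (z (a - p)) + cnj (z (p - a)))) =
       (\<Sum>a\<in>{lo..m-1}. x a * (cnj (x (a - p)) + cnj (x (p - a))))"
  proof (rule sum.cong[OF refl])
    fix a assume a: "a \<in> {lo..m-1}"
    have "lo \<ge> 1" unfolding lo_def using p by auto
    then have "x a = z a" "x (a - p) = z (a - p)" "x (p - a) = z (p - a)" using a p by (auto intro!: xz)
    then show "z a * (cnj (z (a - p)) + cnj (z (p - a))) = x a * (cnj (x (a - p)) + cnj (x (p - a)))" by simp
  qed
  also have "z (p div 2) = x (p div 2)" using p by (intro xz[symmetric]) auto
  finally have R: "CirAut Pn y p = complex_of_real (2 * Re (\<Sum>a\<in>{lo..m-1}. x a * (cnj (x (a - p)) + cnj (x (p - a)))))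
     + (if even p then complex_of_real ((cmod (x (p div 2)))\<^sup>2) else 0)" .
  show "CirAut (4 * M - 3) (\<lambda>q. x q + reversal x q) p =
       (if odd p
        then complex_of_real (2 * Re (\<Sum>p'\<in>{(p + 1) div 2 .. int M - 1}.
                x p' * (cnj (x (p' - p)) + cnj (x (p - p')))))
        else complex_of_real (2 * Re (\<Sum>p'\<in>{p div 2 + 1 .. int M - 1}.
                x p' * (cnj (x (p' - p)) + cnj (x (p - p')))))
             + complex_of_real ((cmod (x (p div 2)))\<^sup>2))"
    using R unfolding Pn_def[symmetric] y_def[abs_def, symmetric] m_def[symmetric] lo_def
    by (cases "odd p") simp_all
qed

end
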